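(* Consider two words $ubav$ and $uabv$ with $a,b \in A$. Let $(x_\ell,y_\ell)$ denote the attribute of position $\ell$ in $ubav$, and let $(x'_\ell,y'_\ell)$ denote the attribute of position $\ell$ in $uabv$. Suppose that $|ub| = i$ and that the attributes $(x_i,y_i)$ and $(x_{i+1},y_{i+1})$ satisfy $x_i = x_{i+1}$. Then all positions $\ell$ satisfy $x'_\ell = x_\ell$.
   Context: $A$ is a finite alphabet. An $\mathsf{X}$-ranker is a nonempty word over $\{\mathsf{X}_a : a\in A\}$ ("go to the next $a$-position", starting with the first $a$-position) and a $\mathsf{Y}$-ranker a nonempty word over $\{\mathsf{Y}_a : a\in A\}$ ("go to the previous $a$-position", starting with the last $a$-position). The attribute of position $\ell$ of a word is $(x_\ell,y_\ell)$, where $x_\ell$ (resp. $y_\ell$) is the length of a shortest $\mathsf{X}$-ranker (resp. $\mathsf{Y}$-ranker) reaching $\ell$. *)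

theory Defs
  imports Main
begin

text \<open>Words are lists; positions are 1-based: position q of w carries letter w ! (q-1).
  A ranker is a list of letters.  An X-ranker starts before the word (position 0),
  each X_a moves to the next a-position strictly to the right.  A Y-ranker starts after the
  word (position length w + 1), each Y_a moves to the previous a-position strictly to the left.\<close>

definition nextpos :: "'a list \<Rightarrow> 'a \<Rightarrow> nat \<Rightarrow> nat option" where
  "nextpos w a p =
     (if \<exists>q. p < q \<and> q \<le> length w \<and> w ! (q - 1) = a
      then Some (LEAST q. p < q \<and> q \<le> length w \<and> w ! (q - 1) = a) else None)"

definition prevpos :: "'a list \<Rightarrow> 'a \<Rightarrow> nat \<Rightarrow> nat option" where
  "prevpos w a p =
     (if \<exists>q. 1 \<le> q \<and> q < p \<and> q \<le> length w \<and> w ! (q - 1) = a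
      then Some (GREATEST q. 1 \<le> q \<and> q < p \<and> q \<le> length w \<and> w ! (q - 1) = a) else None)"

fun xrun :: "'a list \<Rightarrow> 'a list \<Rightarrow> nat \<Rightarrow> nat option" where
  "xrun w [] p = Some p"
| "xrun w (c # r) p = (case nextpos w c p of None \<Rightarrow> None | Some q \<Rightarrow> xrun w r q)"

fun yrun :: "'a list \<Rightarrow> 'a list \<Rightarrow> nat \<Rightarrow> nat option" where
  "yrun w [] p = Some p"
| "yrun w (c # r) p = (case prevpos w c p of None \<Rightarrow> None | Some q \<Rightarrow> yrun w r q)"

definition xranker_pos :: "'a list \<Rightarrow> 'a list \<Rightarrow> nat option" where
  "xranker_pos w r = (if r = [] then None else xrun w r 0)"

definition yranker_pos :: "'a list \<Rightarrow> 'a list \<Rightarrow> nat option" where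
  "yranker_pos w r = (if r = [] then None else yrun w r (length w + 1))"

definition xattr :: "'a list \<Rightarrow> nat \<Rightarrow> nat" where
  "xattr w l = (LEAST n. \<exists>r. length r = n \<and> xranker_pos w r = Some l)"

definition yattr :: "'a list \<Rightarrow> nat \<Rightarrow> nat" where
  "yattr w l = (LEAST n. \<exists>r. length r = n \<and> yranker_pos w r = Some l)"

definition attr :: "'a list \<Rightarrow> nat \<Rightarrow> nat \<times> nat" where
  "attr w l = (xattr w l, yattr w l)"

end

theory Submission
  imports Defs
begin

definition xd :: "'a list \<Rightarrow> nat \<Rightarrow> nat" where
  "xd w l = (LEAST n. \<exists>r. length r = n \<and> xrun w r 0 = Some l)"

definition okp :: "'a list \<Rightarrow> nat \<Rightarrow> nat \<Rightarrow> bool" where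
  "okp w l p = (\<forall>q. p < q \<and> q < l \<longrightarrow> w ! (q - 1) \<noteq> w ! (l - 1))"

lemma nextpos_Some:
  "nextpos w c p = Some l \<longleftrightarrow>
    p < l \<and> l \<le> length w \<and> w ! (l - 1) = c \<and> (\<forall>q. p < q \<and> q < l \<longrightarrow> w ! (q - 1) \<noteq> c)"
  (is "?L \<longleftrightarrow> ?R")
proof
  let ?P = "\<lambda>q. p < q \<and> q \<le> length w \<and> w ! (q - 1) = c"
  assume h: ?L
  have ex: "\<exists>q. ?P q" using h by (auto simp: nextpos_def split: if_splits)
  hence l: "l = (LEAST q. ?P q)" using h by (simp add: nextpos_def)
  have Pl: "?P l" using LeastI_ex[OF ex] l by simp
  moreover have "\<forall>q. p < q \<and> q < l \<longrightarrow> w ! (q - 1) \<noteq> c"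
  proof (intro allI impI)
    fix q assume q: "p < q \<and> q < l"
    show "w ! (q - 1) \<noteq> c"
    proof
      assume "w ! (q - 1) = c"
      then have "?P q" using q Pl by auto
      hence "l \<le> q" unfolding l by (rule Least_le)
      thus False using q by simp
    qed
  qed
  ultimately show ?R by auto
next
  let ?P = "\<lambda>q. p < q \<and> q \<le> length w \<and> w ! (q - 1) = c"
  assume h: ?R
  have ex: "\<exists>q. ?P q" using h by auto
  have "(LEAST q. ?P q) = l"
  proof (rule Least_equality)
    show "?P l" using h by auto
  next
    fix y assume y: "?P y"
    show "l \<le> y"
    proof (rule ccontr)
      assume "\<not> l \<le> y"
      then show False using h y by auto
    qed
  qed
  thus ?L using ex by (simp add: nextpos_def)
qed

lemma xrun_snoc:
  "xrun w (r @ [c]) p = (case xrun w r p of None \<Rightarrow> None | Some q \<Rightarrow> nextpos w c q)"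
  by (induction r arbitrary: p) (auto split: option.splits)

lemma reach: "l \<le> length w \<Longrightarrow> \<exists>r. xrun w r 0 = Some l"
proof (induction l)
  case 0
  have "xrun w [] 0 = Some 0" by simp
  then show ?case by blast
next
  case (Suc l)
  then obtain r where r: "xrun w r 0 = Some l" by auto
  have "nextpos w (w ! l) l = Some (Suc l)" using Suc.prems by (subst nextpos_Some) auto
  then have "xrun w (r @ [w ! l]) 0 = Some (Suc l)" by (simp add: xrun_snoc r)
  then show ?case by blast
qed

lemma xd_ex: "l \<le> length w \<Longrightarrow> \<exists>r. length r = xd w l \<and> xrun w r 0 = Some l"
proof -
  assume "l \<le> length w"
  then obtain r where "xrun w r 0 = Some l" using reach by blast
  then have "\<exists>n r. length r = n \<and> xrun w r 0 = Some l" by blast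
  from LeastI_ex[OF this] show ?thesis unfolding xd_def .
qed

lemma xd_le: "xrun w r 0 = Some l \<Longrightarrow> xd w l \<le> length r"
  unfolding xd_def by (rule Least_le) blast

lemma xd_0: "xd w 0 = 0"
  using xd_le[of w "[]" 0] by simp

lemma A1:
  assumes "p < l" "l \<le> length w" "okp w l p"
  shows "xd w l \<le> Suc (xd w p)"
proof -
  obtain r where r: "length r = xd w p" "xrun w r 0 = Some p" using xd_ex[of p w] assms by auto
  have "nextpos w (w ! (l - 1)) p = Some l" using assms by (subst nextpos_Some) (auto simp: okp_def)
  then have "xrun w (r @ [w ! (l - 1)]) 0 = Some l" by (simp add: xrun_snoc r)
  from xd_le[OF this] show ?thesis using r by simp
qed

lemma A2:
  assumes "1 \<le> l" "l \<le> length w"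
  shows "\<exists>p<l. okp w l p \<and> xd w l = Suc (xd w p)"
proof -
  obtain r where r: "length r = xd w l" "xrun w r 0 = Some l" using xd_ex[of l w] assms by auto
  have "r \<noteq> []" using r assms by auto
  then obtain r' c where rc: "r = r' @ [c]" by (metis rev_exhaust)
  from r(2) obtain p where p: "xrun w r' 0 = Some p" "nextpos w c p = Some l"
    unfolding rc xrun_snoc by (auto split: option.splits)
  from p(2) have np: "p < l" "w ! (l - 1) = c" "\<forall>q. p < q \<and> q < l \<longrightarrow> w ! (q - 1) \<noteq> c"
    by (auto simp: nextpos_Some)
  have ok: "okp w l p" using np by (auto simp: okp_def)
  have "xd w p \<le> length r'" using xd_le[OF p(1)] .
  moreover have "xd w l = Suc (length r')" using r rc by simp
  moreover have "xd w l \<le> Suc (xd w p)" using A1[OF np(1) assms(2) ok] .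
  ultimately show ?thesis using np ok by auto
qed

lemma step_same:
  assumes "1 \<le> l" "l \<le> length w1" "l \<le> length w2" "\<forall>q<l. w1 ! q = w2 ! q"
    "\<forall>p<l. xd w1 p = xd w2 p"
  shows "xd w2 l \<le> xd w1 l"
proof -
  obtain p where p: "p < l" "okp w1 l p" "xd w1 l = Suc (xd w1 p)" using A2[OF assms(1,2)] by auto
  have "okp w2 l p" using p(2) assms(1,4) unfolding okp_def
    by (metis diff_less less_le_trans less_one not_less_eq_eq order_less_imp_le zero_less_one
        Suc_pred' less_trans_Suc)
  from A1[OF p(1) assms(3) this] show ?thesis using p assms(5) by simp
qed

lemma xd_prefix:
  assumes "m \<le> length w1" "m \<le> length w2" "\<forall>q<m. w1 ! q = w2 ! q"
  shows "l \<le> m \<Longrightarrow> xd w1 l = xd w2 l"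
proof (induction l rule: less_induct)
  case (less l)
  show ?case
  proof (cases "l = 0")
    case True then show ?thesis by (simp add: xd_0)
  next
    case False
    have h1: "\<forall>q<l. w1 ! q = w2 ! q" using assms(3) less.prems by auto
    have h2: "\<forall>p<l. xd w1 p = xd w2 p" using less by auto
    have "xd w2 l \<le> xd w1 l"
      using step_same[of l w1 w2] False h1 h2 less.prems assms by auto
    moreover have "xd w1 l \<le> xd w2 l"
      using step_same[of l w2 w1] False h1 h2 less.prems assms by auto
    ultimately show ?thesis by simp
  qed
qed


lemma swap_nth:
  assumes "w1 = u @ [b, a] @ v" "w2 = u @ [a, b] @ v"
  shows "w1 ! length u = b" "w1 ! Suc (length u) = a" "w2 ! length u = a" "w2 ! Suc (length u) = b"
    "\<And>k. k \<noteq> length u \<Longrightarrow> k \<noteq> Suc (length u) \<Longrightarrow> w1 ! k = w2 ! k"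
    "length w1 = length w2"
  using assms by (auto simp: nth_append)

lemma step_swap:
  assumes w: "w1 = u @ [b, a] @ v" "w2 = u @ [a, b] @ v"
    and l: "length u + 3 \<le> l" "l \<le> length w1"
    and IH: "\<forall>p<l. xd w1 p = xd w2 p"
    and eq: "xd w1 (length u + 1) = xd w1 (length u + 2)"
  shows "xd w2 l \<le> xd w1 l"
proof -
  let ?n = "length u"
  note N = swap_nth[OF w]
  have l2: "l \<le> length w2" using l N(6) by simp
  have lsame: "w2 ! (l - 1) = w1 ! (l - 1)" using N(5)[of "l - 1"] l by simp
  obtain p where p: "p < l" "okp w1 l p" "xd w1 l = Suc (xd w1 p)" using A2[of l w1] l by auto
  show ?thesis
  proof (cases "p = ?n + 1")
    case True
    have "okp w2 l (?n + 2)"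
      unfolding okp_def
    proof (intro allI impI)
      fix q assume q: "?n + 2 < q \<and> q < l"
      have "q - 1 \<noteq> ?n" "q - 1 \<noteq> Suc ?n" using q by auto
      then have "w2 ! (q - 1) = w1 ! (q - 1)" using N(5)[of "q - 1"] by metis
      moreover have "w1 ! (q - 1) \<noteq> w1 ! (l - 1)" using p(2) q True unfolding okp_def by auto
      ultimately show "w2 ! (q - 1) \<noteq> w2 ! (l - 1)" using lsame by simp
    qed
    from A1[OF _ l2 this] have "xd w2 l \<le> Suc (xd w2 (?n + 2))" using l by simp
    also have "xd w2 (?n + 2) = xd w1 (?n + 2)" using IH l by simp
    finally show ?thesis using p True eq by simp
  next
    case False
    have "okp w2 l p"
      unfolding okp_def
    proof (intro allI impI)
      fix q assume q: "p < q \<and> q < l"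
      show "w2 ! (q - 1) \<noteq> w2 ! (l - 1)"
      proof (cases "q - 1 = ?n")
        case True
        then have "w2 ! (q - 1) = w1 ! (?n + 1)" using N by simp
        moreover have "w1 ! (?n + 2 - 1) \<noteq> w1 ! (l - 1)"
        proof -
          have "p < ?n + 2" "?n + 2 < l" using q True l by auto
          then show ?thesis using p(2) unfolding okp_def by blast
        qed
        ultimately show ?thesis using lsame by simp
      next
        case F1: False
        show ?thesis
        proof (cases "q - 1 = ?n + 1")
          case True
          then have "w2 ! (q - 1) = w1 ! ?n" using N by simp
          moreover have "w1 ! (?n + 1 - 1) \<noteq> w1 ! (l - 1)"
          proof -
            have "p < ?n + 1" "?n + 1 < l" using q True l False by auto
            then show ?thesis using p(2) unfolding okp_def by blast
          qed
          ultimately show ?thesis using lsame by simp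
        next
          case F2: False
          have "w2 ! (q - 1) = w1 ! (q - 1)" using N(5)[of "q - 1"] F1 F2 by simp
          moreover have "w1 ! (q - 1) \<noteq> w1 ! (l - 1)" using p(2) q unfolding okp_def by auto
          ultimately show ?thesis using lsame by simp
        qed
      qed
    qed
    from A1[OF p(1) l2 this] show ?thesis using p IH by simp
  qed
qed

lemma swap_mid:
  assumes w: "w1 = u @ [b, a] @ v" "w2 = u @ [a, b] @ v" and ab: "a \<noteq> b"
    and pre: "\<forall>p\<le>length u. xd w1 p = xd w2 p"
    and eq: "xd w1 (length u + 1) = xd w1 (length u + 2)"
  shows "xd w2 (length u + 1) = xd w1 (length u + 1) \<and> xd w2 (length u + 2) = xd w1 (length u + 2)"
proof -
  let ?n = "length u"
  note N = swap_nth[OF w]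
  have L1: "?n + 2 \<le> length w1" "?n + 2 \<le> length w2" using w by auto
  have same: "\<And>q. q \<le> ?n \<Longrightarrow> 1 \<le> q \<Longrightarrow> w1 ! (q - 1) = w2 ! (q - 1)" using N(5) by simp
  obtain p1 where p1: "p1 < ?n + 2" "okp w1 (?n + 2) p1" "xd w1 (?n + 2) = Suc (xd w1 p1)"
    using A2[of "?n + 2" w1] L1 by auto
  have p1n: "p1 \<le> ?n" using p1 eq by (cases "p1 = ?n + 1") auto
  have "okp w2 (?n + 1) p1"
    unfolding okp_def
  proof (intro allI impI)
    fix q assume q: "p1 < q \<and> q < ?n + 1"
    then have "q \<le> ?n" "1 \<le> q" by auto
    moreover have "w1 ! (q - 1) \<noteq> w1 ! (?n + 2 - 1)" using p1(2) q unfolding okp_def by auto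
    ultimately show "w2 ! (q - 1) \<noteq> w2 ! (?n + 1 - 1)" using same[of q] N by simp
  qed
  from A1[OF _ _ this] have y1x2: "xd w2 (?n + 1) \<le> xd w1 (?n + 2)" using p1 p1n pre L1 by simp
  obtain p2 where p2: "p2 < ?n + 1" "okp w1 (?n + 1) p2" "xd w1 (?n + 1) = Suc (xd w1 p2)"
    using A2[of "?n + 1" w1] L1 by auto
  have "okp w2 (?n + 2) p2"
    unfolding okp_def
  proof (intro allI impI)
    fix q assume q: "p2 < q \<and> q < ?n + 2"
    show "w2 ! (q - 1) \<noteq> w2 ! (?n + 2 - 1)"
    proof (cases "q = ?n + 1")
      case True then show ?thesis using N ab by simp
    next
      case False
      then have "q \<le> ?n" "1 \<le> q" using q by auto
      then show ?thesis using p2(2) q same[of q] N unfolding okp_def by auto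
    qed
  qed
  from A1[OF _ _ this] have y2x1: "xd w2 (?n + 2) \<le> xd w1 (?n + 1)" using p2 pre L1 by simp
  obtain p3 where p3: "p3 < ?n + 1" "okp w2 (?n + 1) p3" "xd w2 (?n + 1) = Suc (xd w2 p3)"
    using A2[of "?n + 1" w2] L1 by auto
  have "okp w1 (?n + 2) p3"
    unfolding okp_def
  proof (intro allI impI)
    fix q assume q: "p3 < q \<and> q < ?n + 2"
    show "w1 ! (q - 1) \<noteq> w1 ! (?n + 2 - 1)"
    proof (cases "q = ?n + 1")
      case True then show ?thesis using N ab by simp
    next
      case False
      then have "q \<le> ?n" "1 \<le> q" using q by auto
      then show ?thesis using p3(2) q same[of q] N unfolding okp_def by auto
    qed
  qed
  from A1[OF _ _ this] have x2y1: "xd w1 (?n + 2) \<le> xd w2 (?n + 1)" using p3 pre L1 by simp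
  obtain p4 where p4: "p4 < ?n + 2" "okp w2 (?n + 2) p4" "xd w2 (?n + 2) = Suc (xd w2 p4)"
    using A2[of "?n + 2" w2] L1 by auto
  have p4n: "p4 \<le> ?n" using p4 eq y2x1 x2y1 by (cases "p4 = ?n + 1") auto
  have "okp w1 (?n + 1) p4"
    unfolding okp_def
  proof (intro allI impI)
    fix q assume q: "p4 < q \<and> q < ?n + 1"
    then have "q \<le> ?n" "1 \<le> q" by auto
    moreover have "w2 ! (q - 1) \<noteq> w2 ! (?n + 2 - 1)" using p4(2) q unfolding okp_def by auto
    ultimately show "w1 ! (q - 1) \<noteq> w1 ! (?n + 1 - 1)" using same[of q] N by simp
  qed
  from A1[OF _ _ this] have x1y2: "xd w1 (?n + 1) \<le> xd w2 (?n + 2)" using p4 p4n pre L1 by simp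
  show ?thesis using y1x2 y2x1 x2y1 x1y2 eq by linarith
qed

lemma xattr_xd: "1 \<le> l \<Longrightarrow> xattr w l = xd w l"
proof -
  assume "1 \<le> l"
  then have "\<And>r. xranker_pos w r = Some l \<longleftrightarrow> xrun w r 0 = Some l"
    unfolding xranker_pos_def by (case_tac r) auto
  then show ?thesis unfolding xattr_def xd_def by simp
qed

theorem lemma10:
  fixes u v :: "'a list" and a b :: 'a and i :: nat
  assumes "i = length (u @ [b])"
    and "fst (attr (u @ [b, a] @ v) i) = fst (attr (u @ [b, a] @ v) (i + 1))"
  shows "\<forall>l. 1 \<le> l \<and> l \<le> length (u @ [b, a] @ v) \<longrightarrow>
           fst (attr (u @ [a, b] @ v) l) = fst (attr (u @ [b, a] @ v) l)"
proof (cases "a = b")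
  case True then show ?thesis by simp
next
  case ab: False
  define w1 where "w1 = u @ [b, a] @ v"
  define w2 where "w2 = u @ [a, b] @ v"
  let ?n = "length u"
  note N = swap_nth[OF w1_def w2_def]
  have eq: "xd w1 (?n + 1) = xd w1 (?n + 2)"
    using assms unfolding attr_def w1_def by (simp add: xattr_xd)
  have pre: "\<forall>p\<le>?n. xd w1 p = xd w2 p"
  proof (intro allI impI)
    fix p assume "p \<le> ?n"
    then show "xd w1 p = xd w2 p"
      using xd_prefix[of ?n w1 w2 p] N unfolding w1_def w2_def by (auto simp: nth_append)
  qed
  note mid = swap_mid[OF w1_def w2_def ab pre eq]
  have main: "l \<le> length w1 \<Longrightarrow> xd w2 l = xd w1 l" for l
  proof (induction l rule: less_induct)
    case (less l)
    consider "l \<le> ?n" | "l = ?n + 1" | "l = ?n + 2" | "?n + 3 \<le> l" by linarith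
    then show ?case
    proof cases
      case 1 then show ?thesis using pre by simp
    next
      case 2 then show ?thesis using mid by simp
    next
      case 3 then show ?thesis using mid by simp
    next
      case 4
      have IH: "\<forall>p<l. xd w1 p = xd w2 p" using less by auto
      have "xd w2 l \<le> xd w1 l" using step_swap[OF w1_def w2_def 4 less.prems IH eq] .
      moreover have "xd w1 l \<le> xd w2 l"
      proof (rule step_swap[OF w2_def w1_def 4])
        show "l \<le> length w2" using less.prems N(6) by simp
        show "\<forall>p<l. xd w2 p = xd w1 p" using IH by simp
        show "xd w2 (?n + 1) = xd w2 (?n + 2)" using mid eq by simp
      qed
      ultimately show ?thesis by simp
    qed
  qed
  show ?thesis
  proof (intro allI impI)
    fix l assume l: "1 \<le> l \<and> l \<le> length (u @ [b, a] @ v)"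
    then show "fst (attr (u @ [a, b] @ v) l) = fst (attr (u @ [b, a] @ v) l)"
      using main[of l] unfolding attr_def w1_def w2_def by (simp add: xattr_xd)
  qed
qed

end
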